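(* Let $R$ be a commutative ring with identity that is not an integral domain. Then $\gamma_t(\Gamma(R)) = 1$ if and only if $Z(R)$ is an annihilator ideal, i.e., $Z(R) = \operatorname{ann}(a)$ for some $a \in R$.
   Context: All rings are commutative with identity. $Z(R)$ is the set of zero-divisors, $Z(R)^*=Z(R)\setminus\{0\}$, and $\operatorname{ann}(a)=\{x\in R: ax=0\}$. The zero-divisor graph $\Gamma(R)$ has vertex set $Z(R)^*$; distinct $r,s$ are adjacent iff $rs=0$, and $x$ is adjacent to itself iff $x^2=0$. A total dominating set is a set $X\subseteq Z(R)^*$ such that every vertex $v$ is adjacent to some $x\in X$ (self-adjacency counts); $\gamma_t(\Gamma(R))$ is the minimum cardinality of a total dominating set. *)

theory Defs
  imports Main "HOL-Library.Extended_Nat"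
begin

definition zero_divisors :: "'a::comm_ring_1 set" where
  "zero_divisors = {x. \<exists>y. y \<noteq> 0 \<and> x * y = 0}"

definition zd_star :: "'a::comm_ring_1 set" where
  "zd_star = zero_divisors - {0}"

definition ann :: "'a::comm_ring_1 \<Rightarrow> 'a set" where
  "ann a = {x. a * x = 0}"

text \<open>Adjacency in the zero-divisor graph (including self-loops when x^2 = 0).\<close>
definition zdg_adj :: "'a::comm_ring_1 \<Rightarrow> 'a \<Rightarrow> bool" where
  "zdg_adj x y \<longleftrightarrow> x \<in> zd_star \<and> y \<in> zd_star \<and> x * y = 0"

definition total_dominating :: "'a::comm_ring_1 set \<Rightarrow> bool" where
  "total_dominating X \<longleftrightarrow> X \<subseteq> zd_star \<and> (\<forall>v\<in>zd_star. \<exists>x\<in>X. zdg_adj v x)"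

definition gamma_t :: "'a::comm_ring_1 itself \<Rightarrow> enat" where
  "gamma_t _ = (INF X \<in> {X :: 'a set. total_dominating X}.
                   (if finite X then enat (card X) else \<infinity>))"

end

theory Submission
  imports Defs
begin

lemma one_not_zd: "(1::'a::comm_ring_1) \<notin> zero_divisors"
  by (simp add: zero_divisors_def)

lemma inf_mem:
  fixes S :: "enat set"
  assumes "S \<noteq> {}" shows "Inf S \<in> S"
  using assms by (simp add: Inf_enat_def) (meson LeastI ex_in_conv)

theorem theorem3p2:
  assumes not_domain: "\<exists>a b :: 'a::comm_ring_1. a \<noteq> 0 \<and> b \<noteq> 0 \<and> a * b = 0"
  shows "gamma_t TYPE('a) = 1 \<longleftrightarrow> (\<exists>a :: 'a. (zero_divisors :: 'a set) = ann a)"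
proof
  define f :: "'a set \<Rightarrow> enat" where "f = (\<lambda>X. if finite X then enat (card X) else \<infinity>)"
  have g: "gamma_t TYPE('a) = Inf (f ` {X. total_dominating X})"
    by (simp add: gamma_t_def f_def)
  assume h: "gamma_t TYPE('a) = 1"
  have ne: "f ` {X. total_dominating X} \<noteq> {}"
  proof
    assume "f ` {X. total_dominating X} = {}"
    hence "gamma_t TYPE('a) = \<infinity>" using g by (simp add: Inf_enat_def)
    with h show False by simp
  qed
  from inf_mem[OF ne] h g obtain X where X: "total_dominating X" "f X = 1" by auto
  hence "finite X" "card X = 1" by (auto simp: f_def split: if_splits simp: one_enat_def)
  then obtain x where Xx: "X = {x}" by (meson card_1_singletonE)
  have xs: "x \<in> zd_star" using X(1) Xx by (simp add: total_dominating_def)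
  have dom: "\<And>v. v \<in> zd_star \<Longrightarrow> v * x = 0"
    using X(1) Xx by (auto simp: total_dominating_def zdg_adj_def)
  have "zero_divisors = ann x"
  proof (intro set_eqI iffI)
    fix v assume "v \<in> (zero_divisors :: 'a set)"
    show "v \<in> ann x"
    proof (cases "v = 0")
      case True thus ?thesis by (simp add: ann_def)
    next
      case False
      hence "v \<in> zd_star" using \<open>v \<in> zero_divisors\<close> by (simp add: zd_star_def)
      hence "v * x = 0" by (rule dom)
      thus ?thesis by (simp add: ann_def mult.commute)
    qed
  next
    fix v assume "v \<in> ann x"
    hence "v * x = 0" by (simp add: ann_def mult.commute)
    moreover have "x \<noteq> 0" using xs by (simp add: zd_star_def)
    ultimately show "v \<in> zero_divisors" unfolding zero_divisors_def by blast
  qed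
  thus "\<exists>a :: 'a. (zero_divisors :: 'a set) = ann a" by blast
next
  assume "\<exists>a :: 'a. (zero_divisors :: 'a set) = ann a"
  then obtain a :: 'a where Z: "zero_divisors = ann a" by blast
  from not_domain obtain p q :: 'a where pq: "p \<noteq> 0" "q \<noteq> 0" "p * q = 0" by blast
  have qz: "q \<in> zd_star" unfolding zd_star_def zero_divisors_def using pq by (simp add: mult.commute) blast
  have a0: "a \<noteq> 0"
  proof
    assume "a = 0"
    hence "(1::'a) \<in> zero_divisors" using Z by (simp add: ann_def)
    thus False using one_not_zd by blast
  qed
  have "q \<in> ann a" using qz Z by (simp add: zd_star_def)
  hence "a * q = 0" by (simp add: ann_def)
  hence az: "a \<in> zd_star" using pq a0 unfolding zd_star_def zero_divisors_def by blast
  have td: "total_dominating {a}"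
    using az Z by (auto simp: total_dominating_def zdg_adj_def zd_star_def ann_def mult.commute)
  have le: "gamma_t TYPE('a) \<le> 1"
    unfolding gamma_t_def using td by (intro INF_lower2[of "{a}"]) (auto simp: one_enat_def)
  have ge: "1 \<le> gamma_t TYPE('a)"
    unfolding gamma_t_def
  proof (rule INF_greatest)
    fix X :: "'a set" assume "X \<in> {X. total_dominating X}"
    hence "X \<noteq> {}" using qz by (auto simp: total_dominating_def)
    thus "1 \<le> (if finite X then enat (card X) else \<infinity>)"
      by (auto simp: one_enat_def card_gt_0_iff Suc_le_eq)
  qed
  from le ge show "gamma_t TYPE('a) = 1" by simp
qed

end
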